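(* Let $N>3$. Consider quantum strategies given by: an integer $d\ge1$; the state $|\psi\rangle=\sum_{i=1}^N\sqrt{p_i}\,|i\rangle|\chi\rangle\in\mathbb{C}^N\otimes\mathbb{C}^d$ with $p_i\ge0$, $\sum_ip_i=1$ and $|\chi\rangle\in\mathbb{C}^d$ a unit vector; symmetric encoding unitaries $U_{\mathbf{x}}=\sum_{i=1}^N|i\rangle\langle i|\otimes U^{x_i}$ for a single unitary $U$ on $\mathbb{C}^d$ (i.e. $U_1=\cdots=U_N=U$); and a two-outcome POVM $\{\Pi_0,\Pi_1\}$, giving the behavior $P(a|\mathbf{x})=\langle\psi|U_{\mathbf{x}}^\dagger\Pi_aU_{\mathbf{x}}|\psi\rangle$. Then the maximum over all such strategies (all $d$, $p_i$, $\chi$, $U$, POVMs) of $$\frac{1}{N+1}P(0|0\cdots0)+\frac{1}{N+1}\sum_{k=1}^NP(1|e_k)-\frac{N}{N+1}$$ equals $$\delta_N=\frac{1}{(N+1)(N^2-3N+1)},$$ and this maximum is achieved with $d=2$ and the symmetric input state $p_i=1/N$ for all $i$.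
   Context: $\{|i\rangle\}$ is the standard basis of $\mathbb{C}^N$; $e_k\in\{0,1\}^N$ denotes the bit string with a single $1$ in position $k$ and zeros elsewhere. The quantity $\frac{1}{N+1}P(0|0\cdots0)+\frac{1}{N+1}\sum_kP(1|e_k)\le\frac{N}{N+1}$ is the fingerprinting inequality, which holds for all behaviors generated with $N-1$ classical particles; the displayed difference is its violation. *)

theory Defs
  imports "Jordan_Normal_Form.Matrix" Complex_Main
begin

definition adj :: "complex mat \<Rightarrow> complex mat" where
  "adj A = mat (dim_col A) (dim_row A) (\<lambda>(i,j). cnj (A $$ (j,i)))"

definition braket :: "complex vec \<Rightarrow> complex vec \<Rightarrow> complex" where
  "braket v w = (\<Sum>i<dim_vec v. cnj (v $ i) * w $ i)"

definition unitary_mat :: "nat \<Rightarrow> complex mat \<Rightarrow> bool" where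
  "unitary_mat n U \<longleftrightarrow> U \<in> carrier_mat n n \<and> adj U * U = 1\<^sub>m n \<and> U * adj U = 1\<^sub>m n"

definition psd_mat :: "nat \<Rightarrow> complex mat \<Rightarrow> bool" where
  "psd_mat n A \<longleftrightarrow> A \<in> carrier_mat n n \<and> adj A = A \<and>
     (\<forall>v \<in> carrier_vec n. Im (braket v (A *\<^sub>v v)) = 0 \<and> Re (braket v (A *\<^sub>v v)) \<ge> 0)"

text \<open>Space \<open>\<complex>^N \<otimes> \<complex>^d\<close>: basis vector \<open>|i\<rangle>|a\<rangle>\<close> has index \<open>i*d + a\<close>.
  The encoding unitary \<open>U_x = \<Sum>_i |i\<rangle>\<langle>i| \<otimes> U^(x_i)\<close>, bit strings as \<open>nat \<Rightarrow> bool\<close>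
  (True = 1), positions \<open>0..N-1\<close>.\<close>
definition enc_unitary :: "nat \<Rightarrow> nat \<Rightarrow> complex mat \<Rightarrow> (nat \<Rightarrow> bool) \<Rightarrow> complex mat" where
  "enc_unitary N d U x = mat (N*d) (N*d) (\<lambda>(r,c).
     if r div d = c div d then (U ^\<^sub>m (if x (r div d) then 1 else 0)) $$ (r mod d, c mod d) else 0)"

definition in_state :: "nat \<Rightarrow> nat \<Rightarrow> (nat \<Rightarrow> real) \<Rightarrow> complex vec \<Rightarrow> complex vec" where
  "in_state N d p \<chi> = vec (N*d) (\<lambda>r. complex_of_real (sqrt (p (r div d))) * \<chi> $ (r mod d))"

text \<open>\<open>P(a|x) = \<langle>\<psi>|U_x^\<dagger> \<Pi>_a U_x|\<psi>\<rangle>\<close> (real for hermitian \<open>\<Pi>_a\<close>).\<close>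
definition behavior :: "nat \<Rightarrow> nat \<Rightarrow> (nat \<Rightarrow> real) \<Rightarrow> complex vec \<Rightarrow> complex mat
    \<Rightarrow> complex mat \<Rightarrow> (nat \<Rightarrow> bool) \<Rightarrow> real" where
  "behavior N d p \<chi> U Pa x =
     Re (braket (in_state N d p \<chi>)
       ((adj (enc_unitary N d U x) * Pa * enc_unitary N d U x) *\<^sub>v in_state N d p \<chi>))"

definition valid_strategy :: "nat \<Rightarrow> nat \<Rightarrow> (nat \<Rightarrow> real) \<Rightarrow> complex vec \<Rightarrow> complex mat
    \<Rightarrow> complex mat \<Rightarrow> complex mat \<Rightarrow> bool" where
  "valid_strategy N d p \<chi> U Pi0 Pi1 \<longleftrightarrow>
     d \<ge> 1 \<and> (\<forall>i<N. p i \<ge> 0) \<and> (\<Sum>i<N. p i) = 1 \<and>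
     \<chi> \<in> carrier_vec d \<and> braket \<chi> \<chi> = 1 \<and> unitary_mat d U \<and>
     psd_mat (N*d) Pi0 \<and> psd_mat (N*d) Pi1 \<and> Pi0 + Pi1 = 1\<^sub>m (N*d)"

definition fp_violation :: "nat \<Rightarrow> nat \<Rightarrow> (nat \<Rightarrow> real) \<Rightarrow> complex vec \<Rightarrow> complex mat
    \<Rightarrow> complex mat \<Rightarrow> complex mat \<Rightarrow> real" where
  "fp_violation N d p \<chi> U Pi0 Pi1 =
     1 / (real N + 1) * behavior N d p \<chi> U Pi0 (\<lambda>_. False)
     + 1 / (real N + 1) * (\<Sum>k<N. behavior N d p \<chi> U Pi1 (\<lambda>i. i = k))
     - real N / (real N + 1)"

end

theory Submission
  imports Defs
begin


lemma sum_split: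
  "(\<Sum>j<N*d. f j) = (\<Sum>i<N. \<Sum>a<d. f (i*d + a))" for N d :: nat
proof -
  have "(\<Sum>j<N*d. f j) = (\<Sum>i<N. sum f {i*d..<i*d+d})"
    by (rule sum.nat_group[symmetric])
  also have "\<dots> = (\<Sum>i<N. \<Sum>a<d. f (i*d + a))"
  proof (rule sum.cong[OF refl])
    fix i
    have "sum f {i*d..<i*d+d} = sum f {0+i*d..<d+i*d}" by (simp add: add.commute)
    also have "\<dots> = (\<Sum>a=0..<d. f (a + i*d))" by (rule sum.shift_bounds_nat_ivl)
    finally show "sum f {i*d..<i*d+d} = (\<Sum>a<d. f (i*d + a))"
      by (simp add: atLeast0LessThan add.commute)
  qed
  finally show ?thesis .
qed

lemma braket_adj:
  assumes A: "A \<in> carrier_mat n n" and v: "v \<in> carrier_vec n" and w: "w \<in> carrier_vec n"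
  shows "braket v (A *\<^sub>v w) = braket (adj A *\<^sub>v v) w"
proof -
  have "braket v (A *\<^sub>v w) = (\<Sum>i<n. cnj (v$i) * (\<Sum>j<n. A$$(i,j) * w$j))"
    using A v w by (simp add: braket_def scalar_prod_def atLeast0LessThan)
  also have "\<dots> = (\<Sum>i<n. \<Sum>j<n. cnj (v$i) * A$$(i,j) * w$j)"
    by (simp add: sum_distrib_left mult.assoc)
  also have "\<dots> = (\<Sum>j<n. \<Sum>i<n. cnj (v$i) * A$$(i,j) * w$j)"
    by (rule sum.swap)
  also have "\<dots> = (\<Sum>j<n. cnj (\<Sum>i<n. cnj (A$$(i,j)) * v$i) * w$j)"
    by (simp add: sum_distrib_left sum_distrib_right mult_ac)
  also have "\<dots> = braket (adj A *\<^sub>v v) w"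
    using A v w by (simp add: braket_def adj_def scalar_prod_def atLeast0LessThan)
  finally show ?thesis .
qed

lemma adj_carrier: "A \<in> carrier_mat n m \<Longrightarrow> adj A \<in> carrier_mat m n"
  by (simp add: adj_def)

lemma adj_adj: "adj (adj A) = A"
  by (auto simp: adj_def)

lemma braket_conj_adj:
  assumes A: "A \<in> carrier_mat n n" and v: "v \<in> carrier_vec n" and that: "P \<in> carrier_mat n n"
  shows "braket v ((adj A * P * A) *\<^sub>v v) = braket (A *\<^sub>v v) (P *\<^sub>v (A *\<^sub>v v))"
proof -
  have "(adj A * P * A) *\<^sub>v v = adj A *\<^sub>v (P *\<^sub>v (A *\<^sub>v v))"
    using A v that adj_carrier[OF A]
    by (simp add: assoc_mult_mat_vec[of _ n n _ n])
  then show ?thesis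
    using braket_adj[of "adj A" n v "P *\<^sub>v (A *\<^sub>v v)"] A v that adj_carrier[OF A]
    by (simp add: adj_adj)
qed


lemma divmod_simps:
  fixes i b d :: nat
  assumes "b < d" shows "(i*d + b) div d = i" "(i*d + b) mod d = b"
  using assms by auto

lemma sum_if_eq: "i0 < N \<Longrightarrow> (\<Sum>i<N. if i0 = i then f i else 0) = f i0" for i0 N :: nat
  by (simp add: sum.delta)

lemma pow1: "U \<in> carrier_mat d d \<Longrightarrow> U ^\<^sub>m 1 = U"
  by (simp add: pow_mat.simps(2)[of U 0, simplified])

lemma enc_apply:
  assumes U: "U \<in> carrier_mat d d" and chi: "\<chi> \<in> carrier_vec d"
  shows "enc_unitary N d U x *\<^sub>v in_state N d p \<chi> =
    vec (N*d) (\<lambda>j. complex_of_real (sqrt (p (j div d))) *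
       (if x (j div d) then (U *\<^sub>v \<chi>) $ (j mod d) else \<chi> $ (j mod d)))"
proof (rule eq_vecI)
  show "dim_vec (enc_unitary N d U x *\<^sub>v in_state N d p \<chi>) = dim_vec (vec (N*d) (\<lambda>j. complex_of_real (sqrt (p (j div d))) *
       (if x (j div d) then (U *\<^sub>v \<chi>) $ (j mod d) else \<chi> $ (j mod d))))"
    by (simp add: enc_unitary_def)
  fix j assume "j < dim_vec (vec (N*d) (\<lambda>j. complex_of_real (sqrt (p (j div d))) *
       (if x (j div d) then (U *\<^sub>v \<chi>) $ (j mod d) else \<chi> $ (j mod d))))"
  then have j: "j < N*d" by simp
  then have dpos: "d > 0" by (cases "d = 0") auto
  define i0 where "i0 = j div d"
  define al where "al = j mod d"
  have i0: "i0 < N" using j unfolding i0_def by (simp add: less_mult_imp_div_less)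
  have al: "al < d" using dpos unfolding al_def by simp
  define M where "M = U ^\<^sub>m (if x i0 then 1 else 0)"
  have "(enc_unitary N d U x *\<^sub>v in_state N d p \<chi>) $ j =
      (\<Sum>c<N*d. enc_unitary N d U x $$ (j,c) * in_state N d p \<chi> $ c)"
    using j by (simp add: enc_unitary_def in_state_def scalar_prod_def atLeast0LessThan)
  also have "\<dots> = (\<Sum>i<N. \<Sum>b<d. enc_unitary N d U x $$ (j,i*d+b) * in_state N d p \<chi> $ (i*d+b))"
    by (rule sum_split)
  also have "\<dots> = (\<Sum>i<N. if i0 = i then (\<Sum>b<d. M $$ (al, b) * (complex_of_real (sqrt (p i0)) * \<chi> $ b)) else 0)"
  proof (rule sum.cong[OF refl])
    fix i assume i: "i \<in> {..<N}"
    have "\<And>b. b < d \<Longrightarrow> i*d+b < N*d"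
    proof -
      fix b assume b: "b < d"
      have "i*d + b < i*d + d" using b by simp
      also have "\<dots> = Suc i * d" by simp
      also have "\<dots> \<le> N*d" using i by (intro mult_right_mono) auto
      finally show "i*d+b < N*d" .
    qed
    then show "(\<Sum>b<d. enc_unitary N d U x $$ (j,i*d+b) * in_state N d p \<chi> $ (i*d+b)) =
      (if i0 = i then (\<Sum>b<d. M $$ (al, b) * (complex_of_real (sqrt (p i0)) * \<chi> $ b)) else 0)"
      using j by (auto simp: enc_unitary_def in_state_def M_def i0_def al_def divmod_simps intro!: sum.cong)
  qed
  also have "\<dots> = (\<Sum>b<d. M $$ (al, b) * (complex_of_real (sqrt (p i0)) * \<chi> $ b))"
    using i0 by (simp add: sum.delta)
  also have "\<dots> = complex_of_real (sqrt (p i0)) * (\<Sum>b<d. M $$ (al, b) * \<chi> $ b)"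
    by (simp add: sum_distrib_left mult_ac)
  also have "(\<Sum>b<d. M $$ (al, b) * \<chi> $ b) = (if x i0 then (U *\<^sub>v \<chi>) $ al else \<chi> $ al)"
  proof (cases "x i0")
    case True
    then show ?thesis using U chi al by (simp add: M_def pow1 scalar_prod_def atLeast0LessThan)
  next
    case False
    have "(\<Sum>b<d. M $$ (al, b) * \<chi> $ b) = (\<Sum>b<d. if al = b then \<chi> $ b else 0)"
      using False U al by (intro sum.cong) (auto simp: M_def)
    also have "\<dots> = \<chi> $ al" using al by (simp add: sum.delta)
    finally show ?thesis using False by simp
  qed
  finally show "(enc_unitary N d U x *\<^sub>v in_state N d p \<chi>) $ j = vec (N*d) (\<lambda>j. complex_of_real (sqrt (p (j div d))) *
       (if x (j div d) then (U *\<^sub>v \<chi>) $ (j mod d) else \<chi> $ (j mod d))) $ j"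
    using j by (simp add: i0_def al_def)
qed


lemma cnj_mult_self: "cnj z * z = complex_of_real ((cmod z)^2)"
  by (simp add: complex_norm_square[symmetric] mult.commute)

lemma Re_braket_self: "Re (braket v v) = (\<Sum>j<dim_vec v. (cmod (v$j))^2)"
  by (simp add: braket_def cnj_mult_self)

lemma norm_block:
  fixes N d :: nat
  assumes p: "\<forall>i<N. p i \<ge> 0"
  shows "Re (braket (vec (N*d) (\<lambda>j. complex_of_real (sqrt (p (j div d))) * g (j div d) (j mod d)))
                    (vec (N*d) (\<lambda>j. complex_of_real (sqrt (p (j div d))) * g (j div d) (j mod d))))
     = (\<Sum>i<N. p i * (\<Sum>a<d. (cmod (g i a))^2))"
proof -
  have "Re (braket (vec (N*d) (\<lambda>j. complex_of_real (sqrt (p (j div d))) * g (j div d) (j mod d)))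
                    (vec (N*d) (\<lambda>j. complex_of_real (sqrt (p (j div d))) * g (j div d) (j mod d))))
    = (\<Sum>j<N*d. (cmod (complex_of_real (sqrt (p (j div d))) * g (j div d) (j mod d)))^2)"
    by (simp add: Re_braket_self)
  also have "\<dots> = (\<Sum>i<N. \<Sum>a<d. (cmod (complex_of_real (sqrt (p ((i*d+a) div d))) * g ((i*d+a) div d) ((i*d+a) mod d)))^2)"
    by (rule sum_split)
  also have "\<dots> = (\<Sum>i<N. \<Sum>a<d. p i * (cmod (g i a))^2)"
    using p by (intro sum.cong refl) (simp add: divmod_simps norm_mult power_mult_distrib)
  also have "\<dots> = (\<Sum>i<N. p i * (\<Sum>a<d. (cmod (g i a))^2))"
    by (simp add: sum_distrib_left)
  finally show ?thesis .
qed

lemma unit_omega: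
  assumes U: "unitary_mat d U" and chi: "\<chi> \<in> carrier_vec d" and n1: "braket \<chi> \<chi> = 1"
  shows "braket (U *\<^sub>v \<chi>) (U *\<^sub>v \<chi>) = 1"
proof -
  have Uc: "U \<in> carrier_mat d d" and UU: "adj U * U = 1\<^sub>m d" using U by (auto simp: unitary_mat_def)
  have "braket \<chi> (adj U *\<^sub>v (U *\<^sub>v \<chi>)) = braket (adj (adj U) *\<^sub>v \<chi>) (U *\<^sub>v \<chi>)"
    using Uc chi by (intro braket_adj) (auto simp: adj_carrier)
  moreover have "adj U *\<^sub>v (U *\<^sub>v \<chi>) = \<chi>"
    using Uc chi UU by (metis adj_carrier assoc_mult_mat_vec one_mult_mat_vec)
  ultimately show ?thesis using n1 by (simp add: adj_adj)
qed

lemma unit_sum: "braket v v = 1 \<Longrightarrow> (\<Sum>a<dim_vec v. (cmod (v$a))^2) = 1"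
  using Re_braket_self[of v] by simp


definition qf :: "complex mat \<Rightarrow> complex vec \<Rightarrow> real" where
  "qf Q v = Re (braket v (Q *\<^sub>v v))"

definition phi :: "nat \<Rightarrow> nat \<Rightarrow> (nat \<Rightarrow> real) \<Rightarrow> complex vec \<Rightarrow> complex mat \<Rightarrow> (nat \<Rightarrow> bool) \<Rightarrow> complex vec" where
  "phi N d p \<chi> U x = enc_unitary N d U x *\<^sub>v in_state N d p \<chi>"

lemma braket_add2:
  assumes "dim_vec a = dim_vec v" "dim_vec b = dim_vec v"
  shows "braket v (a + b) = braket v a + braket v b"
  using assms by (simp add: braket_def sum.distrib distrib_left)

lemma phi_carrier: "phi N d p \<chi> U x \<in> carrier_vec (N*d)"
  unfolding carrier_vec_def by (simp add: phi_def enc_unitary_def)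

lemma behavior_phi:
  assumes "P \<in> carrier_mat (N*d) (N*d)"
  shows "behavior N d p \<chi> U P x = qf P (phi N d p \<chi> U x)"
  unfolding behavior_def qf_def phi_def
  by (subst braket_conj_adj[of _ "N*d"]) (use assms in \<open>auto simp: enc_unitary_def in_state_def\<close>)

lemma phi_norm:
  assumes V: "valid_strategy N d p \<chi> U Pi0 Pi1"
  shows "Re (braket (phi N d p \<chi> U x) (phi N d p \<chi> U x)) = 1"
proof -
  have U: "U \<in> carrier_mat d d" and chi: "\<chi> \<in> carrier_vec d" and p: "\<forall>i<N. p i \<ge> 0"
    and ps: "(\<Sum>i<N. p i) = 1" and n1: "braket \<chi> \<chi> = 1" and Uu: "unitary_mat d U"
    using V by (auto simp: valid_strategy_def unitary_mat_def)
  have om: "(\<Sum>a<d. (cmod ((U *\<^sub>v \<chi>)$a))^2) = 1"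
    using unit_sum[OF unit_omega[OF Uu chi n1]] U by simp
  have ch: "(\<Sum>a<d. (cmod (\<chi>$a))^2) = 1"
    using unit_sum[OF n1] chi by simp
  have "Re (braket (phi N d p \<chi> U x) (phi N d p \<chi> U x)) =
     (\<Sum>i<N. p i * (\<Sum>a<d. (cmod (if x i then (U *\<^sub>v \<chi>) $ a else \<chi> $ a))^2))"
    unfolding phi_def enc_apply[OF U chi]
    by (rule norm_block[OF p, where g = "\<lambda>i a. if x i then (U *\<^sub>v \<chi>) $ a else \<chi> $ a"])
  also have "\<dots> = (\<Sum>i<N. p i)"
  proof (intro sum.cong refl)
    fix i
    have "(\<Sum>a<d. (cmod (if x i then (U *\<^sub>v \<chi>) $ a else \<chi> $ a))^2) = 1"
      by (cases "x i") (simp_all add: om ch)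
    then show "p i * (\<Sum>a<d. (cmod (if x i then (U *\<^sub>v \<chi>) $ a else \<chi> $ a))^2) = p i" by simp
  qed
  finally show ?thesis using ps by simp
qed

lemma fp_reduce:
  assumes V: "valid_strategy N d p \<chi> U Pi0 Pi1"
  shows "fp_violation N d p \<chi> U Pi0 Pi1 =
    (qf Pi0 (phi N d p \<chi> U (\<lambda>_. False)) - (\<Sum>k<N. qf Pi0 (phi N d p \<chi> U (\<lambda>i. i = k)))) / (real N + 1)"
proof -
  have P0: "Pi0 \<in> carrier_mat (N*d) (N*d)" and P1: "Pi1 \<in> carrier_mat (N*d) (N*d)"
    and sum1: "Pi0 + Pi1 = 1\<^sub>m (N*d)"
    using V by (auto simp: valid_strategy_def psd_mat_def)
  have b1: "behavior N d p \<chi> U Pi1 x = 1 - qf Pi0 (phi N d p \<chi> U x)" for x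
  proof -
    let ?v = "phi N d p \<chi> U x"
    have v: "?v \<in> carrier_vec (N*d)" by (rule phi_carrier)
    have "Pi0 *\<^sub>v ?v + Pi1 *\<^sub>v ?v = ?v"
      using P0 P1 v sum1 by (metis add_mult_distrib_mat_vec one_mult_mat_vec)
    then have "braket ?v (Pi0 *\<^sub>v ?v) + braket ?v (Pi1 *\<^sub>v ?v) = braket ?v ?v"
      using braket_add2[of "Pi0 *\<^sub>v ?v" ?v "Pi1 *\<^sub>v ?v"] P0 P1 v by simp
    then have "Re (braket ?v (Pi1 *\<^sub>v ?v)) = Re (braket ?v ?v) - Re (braket ?v (Pi0 *\<^sub>v ?v))"
      by (metis add_diff_cancel_left' minus_complex.sel(1))
    then show ?thesis using phi_norm[OF V] behavior_phi[OF P1] by (simp add: qf_def)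
  qed
  define q0 where "q0 = qf Pi0 (phi N d p \<chi> U (\<lambda>_. False))"
  define S where "S = (\<Sum>k<N. qf Pi0 (phi N d p \<chi> U (\<lambda>i. i = k)))"
  have "(\<Sum>k<N. behavior N d p \<chi> U Pi1 (\<lambda>i. i = k)) = real N - S"
    unfolding b1 S_def by (simp add: sum_subtractf)
  then have "fp_violation N d p \<chi> U Pi0 Pi1 = q0 / (real N + 1) + (real N - S) / (real N + 1) - real N / (real N + 1)"
    unfolding fp_violation_def behavior_phi[OF P0] q0_def by simp
  also have "\<dots> = (q0 - S) / (real N + 1)"
    by (simp add: diff_divide_distrib add_divide_distrib)
  finally show ?thesis unfolding q0_def S_def .
qed

lemma key_real:
  fixes N x :: real
  assumes N: "N \<ge> 4" and x0: "0 \<le> x" and x2: "x \<le> 2"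
  defines "\<delta> \<equiv> 1 / (N^2 - 3*N + 1)"
  defines "D \<equiv> N^2 - 2*x*(N-1) + \<delta>*N"
  defines "a \<equiv> (N - x) / D"
  shows "(1 - a*(N-1))^2 + a^2 - 2*(1 - a*(N-1))*a*(1-x) \<le> \<delta> * (1 - N*a^2)"
    and "N * a^2 < 1"
proof -
  define K where "K = N^2 - 3*N + 1"
  have "N*(N-3) \<ge> 0" using N by simp
  moreover have "K = N*(N-3) + 1" unfolding K_def by (simp add: algebra_simps power2_eq_square)
  ultimately have K: "K > 0" by simp
  have dK: "\<delta> * K = 1" unfolding \<delta>_def K_def[symmetric] using K by simp
  have dpos: "\<delta> > 0" unfolding \<delta>_def K_def[symmetric] using K by simp
  have "D - ((N-2)^2 + \<delta>*N) = 2*(N-1)*(2-x)" unfolding D_def by (simp add: algebra_simps power2_eq_square)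
  moreover have "2*(N-1)*(2-x) \<ge> 0" using N x2 by simp
  ultimately have D1: "D \<ge> (N-2)^2 + \<delta>*N" by simp
  have Dpos: "D > 0" using D1 dpos N by (smt (verit) mult_pos_pos zero_le_power2)
  define xs where "xs = 1 + \<delta>*(N-1)"
  have hid: "(N-x)^2 - (1-\<delta>)*D = (x - xs)^2 + (\<delta>*K - 1) + \<delta> - \<delta>*(\<delta>*K)"
    unfolding D_def xs_def K_def by (simp add: algebra_simps power2_eq_square)
  then have h: "(N-x)^2 - (1-\<delta>)*D = (x - xs)^2" using dK by simp
  have G: "(1 - a*(N-1))^2 + a^2 - 2*(1 - a*(N-1))*a*(1-x) - \<delta> * (1 - N*a^2)
      = D*a^2 - 2*(N-x)*a + 1 - \<delta>"
    unfolding D_def by (simp add: algebra_simps power2_eq_square)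
  have "D*a^2 - 2*(N-x)*a = - ((N-x)^2 / D)"
    unfolding a_def using Dpos by (simp add: field_simps power2_eq_square)
  then have "D*a^2 - 2*(N-x)*a + 1 - \<delta> = - ((N-x)^2 - (1-\<delta>)*D) / D"
    using Dpos by (simp add: field_simps)
  also have "\<dots> = - ((x - xs)^2 / D)" using h by simp
  also have "\<dots> \<le> 0" using Dpos by simp
  finally show "(1 - a*(N-1))^2 + a^2 - 2*(1 - a*(N-1))*a*(1-x) \<le> \<delta> * (1 - N*a^2)"
    using G by linarith
  define s where "s = sqrt N"
  have s2: "s^2 = N" unfolding s_def using N by simp
  have s0: "s \<ge> 2" unfolding s_def using N real_sqrt_le_mono[of 4 N] by simp
  have "D - s*(N-x) = (N-2)*((s-2)*(s+1)) + \<delta>*N + (2-x)*(2*(N-1) - s)"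
    unfolding D_def using s2 by (simp add: algebra_simps power2_eq_square) 
  moreover have "(N-2)*((s-2)*(s+1)) \<ge> 0" using N s0 by simp
  moreover have "(2-x)*(2*(N-1) - s) \<ge> 0"
  proof -
    have "N - s = s*(s-1)" using s2 by (simp add: algebra_simps power2_eq_square)
    moreover have "s*(s-1) \<ge> 0" using s0 by simp
    ultimately have "s \<le> N" by simp
    then show ?thesis using x2 N by simp
  qed
  moreover have "\<delta>*N > 0" using dpos N by simp
  ultimately have lt: "s*(N-x) < D" by linarith
  have ge: "s*(N-x) \<ge> 0" using s0 x2 N by simp
  have "N*(N-x)^2 = (s*(N-x))^2" using s2 by (simp add: power_mult_distrib)
  also have "\<dots> < D^2" using lt ge by (simp add: power_strict_mono)
  finally have "N*(N-x)^2 < D^2" .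
  then show "N * a^2 < 1" unfolding a_def using Dpos by (simp add: field_simps power_divide)
qed

lemma qf_sum:
  assumes Q: "Q \<in> carrier_mat n n"
  shows "qf Q (vec n f) = Re (\<Sum>j<n. \<Sum>c<n. Q$$(j,c) * (cnj (f j) * f c))"
  using Q by (simp add: qf_def braket_def scalar_prod_def atLeast0LessThan sum_distrib_left mult_ac)

lemma sum_swap3:
  "(\<Sum>k<N. \<Sum>j<n. \<Sum>c<m. X k j c) = (\<Sum>j<n. \<Sum>c<m. \<Sum>k<N. X k j c)" for N n m :: nat
proof -
  have "(\<Sum>k<N. \<Sum>j<n. \<Sum>c<m. X k j c) = (\<Sum>j<n. \<Sum>k<N. \<Sum>c<m. X k j c)" by (rule sum.swap)
  also have "\<dots> = (\<Sum>j<n. \<Sum>c<m. \<Sum>k<N. X k j c)" by (intro sum.cong refl sum.swap)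
  finally show ?thesis .
qed

lemma sum_cov:
  fixes X Y :: "nat \<Rightarrow> complex" and N :: nat
  assumes "N > 0"
  shows "(\<Sum>k<N. (X k - (\<Sum>k<N. X k) / of_nat N) * (Y k - (\<Sum>k<N. Y k) / of_nat N))
     = (\<Sum>k<N. X k * Y k) - (\<Sum>k<N. X k) * (\<Sum>k<N. Y k) / of_nat N"
proof -
  define SX where "SX = (\<Sum>k<N. X k)"
  define SY where "SY = (\<Sum>k<N. Y k)"
  have "(\<Sum>k<N. (X k - SX / of_nat N) * (Y k - SY / of_nat N))
      = (\<Sum>k<N. X k * Y k - (SY / of_nat N) * X k - (SX / of_nat N) * Y k + SX*SY/(of_nat N)^2)"
    by (intro sum.cong refl) (simp add: algebra_simps power2_eq_square)
  also have "\<dots> = (\<Sum>k<N. X k * Y k) - (SY / of_nat N) * SX - (SX / of_nat N) * SY + of_nat N * (SX*SY/(of_nat N)^2)"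
  proof -
    have e1: "(\<Sum>k<N. (SY / of_nat N) * X k) = (SY / of_nat N) * SX"
      unfolding SX_def by (rule sum_distrib_left[symmetric])
    have e2: "(\<Sum>k<N. (SX / of_nat N) * Y k) = (SX / of_nat N) * SY"
      unfolding SY_def by (rule sum_distrib_left[symmetric])
    have e3: "(\<Sum>k<N. SX*SY/(of_nat N)^2) = of_nat N * (SX*SY/(of_nat N)^2)" by simp
    show ?thesis by (simp only: sum.distrib sum_subtractf e1 e2 e3)
  qed
  also have "\<dots> = (\<Sum>k<N. X k * Y k) - SX * SY / of_nat N"
    using assms by (simp add: field_simps power2_eq_square)
  finally show ?thesis unfolding SX_def SY_def .
qed

lemma point_id:
  fixes A0 B0 SX SY P :: complex and a :: real and N :: nat
  assumes "N > 0"
  defines "t \<equiv> of_nat N * (of_real a)^2"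
  shows "(1 - t) * (A0 * B0 - P) =
     (A0 - of_real a * SX) * (B0 - of_real a * SY)
     - ((1-t)*SX - of_nat N * of_real a * (A0 - of_real a * SX)) * ((1-t)*SY - of_nat N * of_real a * (B0 - of_real a * SY)) / of_nat N
     - (1-t) * (P - SX * SY / of_nat N)"
  using assms unfolding t_def by (simp add: field_simps power2_eq_square)


lemma dsum_lin2:
  fixes Q A B :: "nat \<Rightarrow> nat \<Rightarrow> complex"
  shows "(\<Sum>j<n. \<Sum>c<m. Q j c * (\<alpha> * (A j c - B j c))) =
     \<alpha> * ((\<Sum>j<n. \<Sum>c<m. Q j c * A j c) - (\<Sum>j<n. \<Sum>c<m. Q j c * B j c))"
proof -
  have "(\<Sum>j<n. \<Sum>c<m. Q j c * (\<alpha> * (A j c - B j c))) =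
      (\<Sum>j<n. \<Sum>c<m. \<alpha> * (Q j c * A j c) - \<alpha> * (Q j c * B j c))"
    by (intro sum.cong refl) (simp add: algebra_simps)
  also have "\<dots> = \<alpha> * ((\<Sum>j<n. \<Sum>c<m. Q j c * A j c) - (\<Sum>j<n. \<Sum>c<m. Q j c * B j c))"
    by (simp only: sum_subtractf sum_distrib_left[symmetric] right_diff_distrib)
  finally show ?thesis .
qed

lemma dsum_lin3:
  fixes Q A B C :: "nat \<Rightarrow> nat \<Rightarrow> complex"
  shows "(\<Sum>j<n. \<Sum>c<m. Q j c * (A j c - B j c / \<beta> - \<gamma> * C j c)) =
     (\<Sum>j<n. \<Sum>c<m. Q j c * A j c) - (\<Sum>j<n. \<Sum>c<m. Q j c * B j c) / \<beta> - \<gamma> * (\<Sum>j<n. \<Sum>c<m. Q j c * C j c)"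
proof -
  have "(\<Sum>j<n. \<Sum>c<m. Q j c * (A j c - B j c / \<beta> - \<gamma> * C j c)) =
      (\<Sum>j<n. \<Sum>c<m. Q j c * A j c - (Q j c * B j c) / \<beta> - \<gamma> * (Q j c * C j c))"
    by (intro sum.cong refl) (simp add: algebra_simps)
  also have "\<dots> = (\<Sum>j<n. \<Sum>c<m. Q j c * A j c) - (\<Sum>j<n. \<Sum>c<m. Q j c * B j c) / \<beta> - \<gamma> * (\<Sum>j<n. \<Sum>c<m. Q j c * C j c)"
    by (simp only: sum_subtractf sum_distrib_left[symmetric] sum_divide_distrib[symmetric])
  finally show ?thesis .
qed

lemma qf_identity:
  fixes N n :: nat and a :: real and f0 :: "nat \<Rightarrow> complex" and g :: "nat \<Rightarrow> nat \<Rightarrow> complex"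
  assumes Q: "Q \<in> carrier_mat n n" and N: "N > 0"
  defines "S \<equiv> \<lambda>j. \<Sum>k<N. g k j"
  defines "r \<equiv> \<lambda>j. f0 j - of_real a * S j"
  defines "tr \<equiv> real N * a^2"
  defines "w \<equiv> \<lambda>j. (1 - of_real tr) * S j - of_nat N * of_real a * r j"
  defines "mm \<equiv> \<lambda>k j. g k j - S j / of_nat N"
  shows "(1 - tr) * (qf Q (vec n f0) - (\<Sum>k<N. qf Q (vec n (g k)))) =
     qf Q (vec n r) - qf Q (vec n w) / real N - (1 - tr) * (\<Sum>k<N. qf Q (vec n (mm k)))"
proof -
  define C where "C = (\<lambda>f. \<Sum>j<n. \<Sum>c<n. Q$$(j,c) * (cnj (f j) * f c))"
  have qC: "qf Q (vec n f) = Re (C f)" for f unfolding C_def by (rule qf_sum[OF Q])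
  have sC: "(\<Sum>k<N. C (h k)) = (\<Sum>j<n. \<Sum>c<n. Q$$(j,c) * (\<Sum>k<N. cnj (h k j) * h k c))" for h
    unfolding C_def by (simp add: sum_swap3[where X = "\<lambda>k j c. Q$$(j,c) * (cnj (h k j) * h k c)"] sum_distrib_left)
  define t where "t = (complex_of_real tr)"
  have ct: "cnj t = t" unfolding t_def by simp
  have t_eq: "t = of_nat N * (of_real a)^2" unfolding t_def tr_def by simp
  have pw: "(1 - t) * (cnj (f0 j) * f0 c - (\<Sum>k<N. cnj (g k j) * g k c)) =
     cnj (r j) * r c - cnj (w j) * w c / of_nat N - (1 - t) * (\<Sum>k<N. cnj (mm k j) * mm k c)" for j c
  proof -
    have cS: "cnj (S j) = (\<Sum>k<N. cnj (g k j))" unfolding S_def by (simp add: cnj_sum)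
    have cr: "cnj (r j) = cnj (f0 j) - of_real a * (\<Sum>k<N. cnj (g k j))" unfolding r_def using cS by simp
    have cw: "cnj (w j) = (1 - t) * (\<Sum>k<N. cnj (g k j)) - of_nat N * of_real a * (cnj (f0 j) - of_real a * (\<Sum>k<N. cnj (g k j)))"
      unfolding w_def t_def[symmetric] using cS cr ct by simp
    have rc: "r c = f0 c - of_real a * (\<Sum>k<N. g k c)" unfolding r_def S_def by simp
    have wc: "w c = (1 - t) * (\<Sum>k<N. g k c) - of_nat N * of_real a * (f0 c - of_real a * (\<Sum>k<N. g k c))"
      unfolding w_def t_def[symmetric] rc S_def by simp
    have cm: "(\<Sum>k<N. cnj (mm k j) * mm k c) = (\<Sum>k<N. cnj (g k j) * g k c) - (\<Sum>k<N. cnj (g k j)) * (\<Sum>k<N. g k c) / of_nat N"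
    proof -
      have "(\<Sum>k<N. cnj (mm k j) * mm k c) = (\<Sum>k<N. (cnj (g k j) - (\<Sum>k<N. cnj (g k j)) / of_nat N) * (g k c - (\<Sum>k<N. g k c) / of_nat N))"
        unfolding mm_def using cS by (simp add: S_def)
      also have "\<dots> = (\<Sum>k<N. cnj (g k j) * g k c) - (\<Sum>k<N. cnj (g k j)) * (\<Sum>k<N. g k c) / of_nat N"
        by (rule sum_cov[OF N])
      finally show ?thesis .
    qed
    show ?thesis unfolding cr cw rc wc cm t_eq
      by (rule point_id[OF N])
  qed
  have "(1 - t) * (C f0 - (\<Sum>k<N. C (g k))) = C r - C w / of_nat N - (1 - t) * (\<Sum>k<N. C (mm k))"
  proof -
    have "(1 - t) * (C f0 - (\<Sum>k<N. C (g k))) = (\<Sum>j<n. \<Sum>c<n. Q$$(j,c) * ((1 - t) * (cnj (f0 j) * f0 c - (\<Sum>k<N. cnj (g k j) * g k c))))"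
      unfolding sC dsum_lin2 by (simp only: C_def)
    also have "\<dots> = (\<Sum>j<n. \<Sum>c<n. Q$$(j,c) * (cnj (r j) * r c - cnj (w j) * w c / of_nat N - (1 - t) * (\<Sum>k<N. cnj (mm k j) * mm k c)))"
      unfolding pw ..
    also have "\<dots> = C r - C w / of_nat N - (1 - t) * (\<Sum>k<N. C (mm k))"
      unfolding sC dsum_lin3 by (simp only: C_def)
    finally show ?thesis .
  qed
  then have "Re ((1 - t) * (C f0 - (\<Sum>k<N. C (g k)))) = Re (C r - C w / of_nat N - (1 - t) * (\<Sum>k<N. C (mm k)))"
    by simp
  moreover have "1 - t = complex_of_real (1 - tr)" unfolding t_def by simp
  ultimately have "(1 - tr) * (Re (C f0) - (\<Sum>k<N. Re (C (g k)))) = Re (C r) - Re (C w) / real N - (1 - tr) * (\<Sum>k<N. Re (C (mm k)))"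
    by (simp add: Re_sum)
  then show ?thesis unfolding qC .
qed


lemma pi1_split:
  assumes V: "valid_strategy N d p \<chi> U Pi0 Pi1" and v: "v \<in> carrier_vec (N*d)"
  shows "Re (braket v (Pi1 *\<^sub>v v)) = Re (braket v v) - qf Pi0 v"
proof -
  have P0: "Pi0 \<in> carrier_mat (N*d) (N*d)" and P1: "Pi1 \<in> carrier_mat (N*d) (N*d)"
    and sum1: "Pi0 + Pi1 = 1\<^sub>m (N*d)"
    using V by (auto simp: valid_strategy_def psd_mat_def)
  have "Pi0 *\<^sub>v v + Pi1 *\<^sub>v v = v"
    using P0 P1 v sum1 by (metis add_mult_distrib_mat_vec one_mult_mat_vec)
  then have "braket v (Pi0 *\<^sub>v v) + braket v (Pi1 *\<^sub>v v) = braket v v"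
    using braket_add2[of "Pi0 *\<^sub>v v" v "Pi1 *\<^sub>v v"] P0 P1 v by simp
  then show ?thesis unfolding qf_def
    by (metis add_diff_cancel_left' minus_complex.sel(1))
qed

lemma cmod_lin2:
  fixes mu nu :: real and u v :: complex
  shows "(cmod (of_real mu * u + of_real nu * v))^2 = mu^2 * (cmod u)^2 + nu^2 * (cmod v)^2 + 2*mu*nu*Re (cnj u * v)"
  by (simp only: cmod_power2) (simp add: power2_eq_square algebra_simps)

lemma sum_lin2:
  fixes mu nu :: real and u v :: "complex vec"
  assumes u: "u \<in> carrier_vec d" and v: "v \<in> carrier_vec d"
    and nu1: "braket u u = 1" and nv1: "braket v v = 1"
  shows "(\<Sum>a<d. (cmod (of_real mu * u$a + of_real nu * v$a))^2) = mu^2 + nu^2 + 2*mu*nu*Re (braket u v)"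
proof -
  have "(\<Sum>a<d. (cmod (of_real mu * u$a + of_real nu * v$a))^2) =
     (\<Sum>a<d. mu^2 * (cmod (u$a))^2 + nu^2 * (cmod (v$a))^2 + 2*mu*nu*Re (cnj (u$a) * v$a))"
    by (simp add: cmod_lin2)
  also have "\<dots> = mu^2 * (\<Sum>a<d. (cmod (u$a))^2) + nu^2 * (\<Sum>a<d. (cmod (v$a))^2) + 2*mu*nu*(\<Sum>a<d. Re (cnj (u$a) * v$a))"
    by (simp only: sum.distrib sum_distrib_left)
  also have "\<dots> = mu^2 + nu^2 + 2*mu*nu*Re (braket u v)"
  proof -
    have "(\<Sum>a<d. Re (cnj (u$a) * v$a)) = Re (braket u v)" using u by (simp add: braket_def Re_sum)
    then show ?thesis using unit_sum[OF nu1] unit_sum[OF nv1] u v by simp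
  qed
  finally show ?thesis .
qed

lemma sum_if_count:
  fixes A B :: complex and N i :: nat
  assumes "i < N"
  shows "(\<Sum>k<N. if i = k then A else B) = A + (of_nat N - 1) * B"
proof -
  have "(\<Sum>k<N. if i = k then A else B) = (\<Sum>k<N. B + (if i = k then A - B else 0))"
    by (intro sum.cong refl) auto
  also have "\<dots> = of_nat N * B + (A - B)" using assms by (simp add: sum.distrib)
  finally show ?thesis by (simp add: algebra_simps)
qed


lemma upper_bound:
  assumes N3: "N > 3" and V: "valid_strategy N d p \<chi> U Pi0 Pi1"
  shows "fp_violation N d p \<chi> U Pi0 Pi1 \<le> 1 / ((real N + 1) * (real N ^ 2 - 3 * real N + 1))"
proof -
  have U: "U \<in> carrier_mat d d" and chi: "\<chi> \<in> carrier_vec d" and p: "\<forall>i<N. p i \<ge> 0"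
    and ps: "(\<Sum>i<N. p i) = 1" and n1: "braket \<chi> \<chi> = 1" and Uu: "unitary_mat d U"
    and P0: "psd_mat (N*d) Pi0" and P1: "psd_mat (N*d) Pi1"
    using V by (auto simp: valid_strategy_def unitary_mat_def)
  have P0c: "Pi0 \<in> carrier_mat (N*d) (N*d)" using P0 by (simp add: psd_mat_def)
  have P0pos: "v \<in> carrier_vec (N*d) \<Longrightarrow> qf Pi0 v \<ge> 0" for v using P0 by (simp add: psd_mat_def qf_def)
  have P1pos: "v \<in> carrier_vec (N*d) \<Longrightarrow> Re (braket v (Pi1 *\<^sub>v v)) \<ge> 0" for v using P1 by (simp add: psd_mat_def)
  define om where "om = U *\<^sub>v \<chi>"
  have om: "om \<in> carrier_vec d" unfolding om_def using U chi by simp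
  have n2: "braket om om = 1" unfolding om_def by (rule unit_omega[OF Uu chi n1])
  define cr where "cr = Re (braket \<chi> om)"
  have lin: "(\<Sum>a<d. (cmod (of_real mu * \<chi>$a + of_real nu * om$a))^2) = mu^2 + nu^2 + 2*mu*nu*cr" for mu nu
    unfolding cr_def by (rule sum_lin2[OF chi om n1 n2])
  have "0 \<le> (\<Sum>a<d. (cmod (of_real 1 * \<chi>$a + of_real 1 * om$a))^2)" by (intro sum_nonneg) simp
  then have cr1: "cr \<ge> -1" unfolding lin by simp
  have "0 \<le> (\<Sum>a<d. (cmod (of_real 1 * \<chi>$a + of_real (-1) * om$a))^2)" by (intro sum_nonneg) simp
  then have cr2: "cr \<le> 1" unfolding lin by simp
  define x where "x = 1 - cr"
  have x0: "0 \<le> x" and x2: "x \<le> 2" unfolding x_def using cr1 cr2 by auto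
  have N4: "real N \<ge> 4" using N3 by simp
  define \<delta> where "\<delta> = 1 / (real N ^ 2 - 3 * real N + 1)"
  define D where "D = real N ^ 2 - 2*x*(real N-1) + \<delta>*real N"
  define a where "a = (real N - x) / D"
  have kA: "(1 - a*(real N-1))^2 + a^2 - 2*(1 - a*(real N-1))*a*(1-x) \<le> \<delta> * (1 - real N*a^2)"
    and kB: "real N * a^2 < 1"
    using key_real[OF N4 x0 x2] unfolding \<delta>_def D_def a_def by auto
  define n where "n = N*d"
  define f0 where "f0 = (\<lambda>j. complex_of_real (sqrt (p (j div d))) * \<chi> $ (j mod d))"
  define g where "g = (\<lambda>k j. complex_of_real (sqrt (p (j div d))) * (if j div d = k then om $ (j mod d) else \<chi> $ (j mod d)))"
  have phi0: "phi N d p \<chi> U (\<lambda>_. False) = vec n f0"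
    unfolding phi_def enc_apply[OF U chi] n_def f0_def by simp
  have phik: "phi N d p \<chi> U (\<lambda>i. i = k) = vec n (g k)" for k
    unfolding phi_def enc_apply[OF U chi] n_def g_def om_def by simp
  define S where "S \<equiv> \<lambda>j. \<Sum>k<N. g k j"
  define r where "r \<equiv> \<lambda>j. f0 j - of_real a * S j"
  define tr where "tr \<equiv> real N * a^2"
  define w where "w \<equiv> \<lambda>j. (1 - of_real tr) * S j - of_nat N * of_real a * r j"
  define mm where "mm \<equiv> \<lambda>k j. g k j - S j / of_nat N"
  have Npos: "N > 0" using N3 by simp
  have ident: "(1 - tr) * (qf Pi0 (vec n f0) - (\<Sum>k<N. qf Pi0 (vec n (g k)))) =
     qf Pi0 (vec n r) - qf Pi0 (vec n w) / real N - (1 - tr) * (\<Sum>k<N. qf Pi0 (vec n (mm k)))"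
    unfolding S_def r_def tr_def w_def mm_def
    by (rule qf_identity[OF P0c[folded n_def] Npos])
  have tr1: "1 - tr > 0" using kB unfolding tr_def by simp
  have qw: "qf Pi0 (vec n w) \<ge> 0" using P0pos[of "vec n w"] unfolding n_def by simp
  have qm: "(\<Sum>k<N. qf Pi0 (vec n (mm k))) \<ge> 0"
    by (intro sum_nonneg) (use P0pos in \<open>simp add: n_def\<close>)
  have qr: "qf Pi0 (vec n r) \<le> Re (braket (vec n r) (vec n r))"
    using P1pos[of "vec n r"] pi1_split[OF V, of "vec n r"] unfolding n_def by simp
  define mu where "mu = 1 - a*(real N - 1)"
  have rvec: "vec n r = vec (N*d) (\<lambda>j. complex_of_real (sqrt (p (j div d))) *
      (of_real mu * \<chi> $ (j mod d) + of_real (-a) * om $ (j mod d)))"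
  proof (rule eq_vecI)
    fix j assume "j < dim_vec (vec (N*d) (\<lambda>j. complex_of_real (sqrt (p (j div d))) *
      (of_real mu * \<chi> $ (j mod d) + of_real (-a) * om $ (j mod d))))"
    then have j: "j < N*d" by simp
    then have i: "j div d < N" by (simp add: less_mult_imp_div_less)
    have Sj: "S j = complex_of_real (sqrt (p (j div d))) * (om $ (j mod d) + (of_nat N - 1) * \<chi> $ (j mod d))"
      unfolding S_def g_def
      by (simp add: sum_distrib_left[symmetric] sum_if_count[OF i])
    have "r j = complex_of_real (sqrt (p (j div d))) *
      (of_real mu * \<chi> $ (j mod d) + of_real (-a) * om $ (j mod d))"
      unfolding r_def f0_def mu_def Sj by (simp add: algebra_simps)
    then show "vec n r $ j = vec (N*d) (\<lambda>j. complex_of_real (sqrt (p (j div d))) *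
      (of_real mu * \<chi> $ (j mod d) + of_real (-a) * om $ (j mod d))) $ j"
      using j unfolding n_def by simp
  qed (simp add: n_def)
  have "Re (braket (vec n r) (vec n r)) = (\<Sum>i<N. p i * (\<Sum>b<d. (cmod (of_real mu * \<chi>$b + of_real (-a) * om$b))^2))"
    unfolding rvec by (rule norm_block[OF p, where g="\<lambda>i b. of_real mu * \<chi>$b + of_real (-a) * om$b"])
  also have "\<dots> = (\<Sum>i<N. p i * (mu^2 + (-a)^2 + 2*mu*(-a)*cr))"
    unfolding lin ..
  also have "\<dots> = mu^2 + a^2 - 2*mu*a*cr"
    using ps by (simp add: sum_distrib_right[symmetric])
  also have "\<dots> \<le> \<delta> * (1 - tr)"
    using kA unfolding mu_def tr_def x_def by simp
  finally have rn: "Re (braket (vec n r) (vec n r)) \<le> \<delta> * (1 - tr)" .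
  have "(1 - tr) * (qf Pi0 (vec n f0) - (\<Sum>k<N. qf Pi0 (vec n (g k)))) \<le> (1 - tr) * \<delta>"
  proof -
    have "qf Pi0 (vec n w) / real N \<ge> 0" using qw by simp
    moreover have "(1 - tr) * (\<Sum>k<N. qf Pi0 (vec n (mm k))) \<ge> 0" using tr1 qm by simp
    ultimately show ?thesis using ident qr rn by (simp add: mult.commute)
  qed
  then have main: "qf Pi0 (vec n f0) - (\<Sum>k<N. qf Pi0 (vec n (g k))) \<le> \<delta>"
    using tr1 by simp
  have e: "1 / ((real N + 1) * (real N ^ 2 - 3 * real N + 1)) = \<delta> / (real N + 1)"
    unfolding \<delta>_def by simp
  show ?thesis
    unfolding fp_reduce[OF V] phi0 phik e
    using divide_right_mono[OF main, of "real N + 1"] by simp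
qed





definition proj1 :: "nat \<Rightarrow> complex vec \<Rightarrow> complex mat" where
  "proj1 n f = mat n n (\<lambda>(j,c). f$j * cnj (f$c))"

lemma braket_diff2:
  assumes "dim_vec a = dim_vec v" "dim_vec b = dim_vec v"
  shows "braket v (a - b) = braket v a - braket v b"
  using assms by (simp add: braket_def sum_subtractf right_diff_distrib)

lemma braket_cnj:
  assumes "dim_vec v = dim_vec w"
  shows "cnj (braket v w) = braket w v"
  using assms by (simp add: braket_def cnj_sum mult.commute)

lemma proj1_braket:
  assumes f: "f \<in> carrier_vec n" and v: "v \<in> carrier_vec n"
  shows "braket v (proj1 n f *\<^sub>v v) = complex_of_real ((cmod (braket f v))^2)"
proof -
  have "braket v (proj1 n f *\<^sub>v v) = (\<Sum>j<n. cnj (v$j) * (\<Sum>c<n. f$j * cnj (f$c) * v$c))"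
    using f v by (simp add: braket_def proj1_def scalar_prod_def atLeast0LessThan)
  also have "\<dots> = (\<Sum>j<n. cnj (v$j) * f$j) * (\<Sum>c<n. cnj (f$c) * v$c)"
    by (subst sum_product) (simp add: sum_distrib_left mult_ac)
  also have "(\<Sum>c<n. cnj (f$c) * v$c) = braket f v" using f by (simp add: braket_def)
  also have "(\<Sum>j<n. cnj (v$j) * f$j) = cnj (braket f v)"
    using f v braket_cnj[of f v] by (simp add: braket_def)
  finally show ?thesis by (simp add: cnj_mult_self)
qed

lemma cauchy_schwarz1:
  assumes f: "f \<in> carrier_vec n" and v: "v \<in> carrier_vec n" and f1: "braket f f = 1"
  shows "(cmod (braket f v))^2 \<le> Re (braket v v)"
proof -
  define L where "L = braket f v"
  have cL: "(\<Sum>j<n. cnj (v$j) * f$j) = cnj L"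
    unfolding L_def using f v braket_cnj[of f v] by (simp add: braket_def)
  have L': "(\<Sum>j<n. cnj (f$j) * v$j) = L" unfolding L_def using f by (simp add: braket_def)
  have ff: "(\<Sum>j<n. cnj (f$j) * f$j) = 1" using f f1 by (simp add: braket_def)
  have vv: "(\<Sum>j<n. cnj (v$j) * v$j) = braket v v" using v by (simp add: braket_def)
  have "(\<Sum>j<n. cnj (v$j - L * f$j) * (v$j - L * f$j)) =
     (\<Sum>j<n. cnj (v$j) * v$j - L * (cnj (v$j) * f$j) - cnj L * (cnj (f$j) * v$j) + (cnj L * L) * (cnj (f$j) * f$j))"
    by (intro sum.cong refl) (simp add: algebra_simps)
  also have "\<dots> = braket v v - L * cnj L - cnj L * L + cnj L * L"
    by (simp only: sum.distrib sum_subtractf sum_distrib_left[symmetric] cL L' ff vv mult_1_right)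
  also have "\<dots> = braket v v - cnj L * L"
    by (simp add: mult.commute)
  also have "\<dots> = braket v v - complex_of_real ((cmod L)^2)"
    by (simp only: cnj_mult_self)
  finally have eq: "(\<Sum>j<n. cnj (v$j - L * f$j) * (v$j - L * f$j)) = braket v v - complex_of_real ((cmod L)^2)" .
  have h: "(\<Sum>j<n. cnj (v$j - L * f$j) * (v$j - L * f$j)) = complex_of_real (\<Sum>j<n. (cmod (v$j - L * f$j))^2)"
    by (simp only: cnj_mult_self of_real_sum)
  have X: "(\<Sum>j<n. (cmod (v$j - L * f$j))^2) \<ge> 0" by (intro sum_nonneg) simp
  have "braket v v - complex_of_real ((cmod L)^2) = complex_of_real (\<Sum>j<n. (cmod (v$j - L * f$j))^2)"
    using eq h by simp
  then have "Re (braket v v - complex_of_real ((cmod L)^2)) \<ge> 0" using X by (simp only: Re_complex_of_real)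
  then have "Re (braket v v) - (cmod L)^2 \<ge> 0" by (simp only: minus_complex.sel(1) Re_complex_of_real)
  then show ?thesis unfolding L_def by simp
qed

lemma adj_minus_proj:
  "adj (1\<^sub>m n - proj1 n f) = 1\<^sub>m n - proj1 n f"
proof (rule eq_matI)
  fix i j assume "i < dim_row (1\<^sub>m n - proj1 n f)" "j < dim_col (1\<^sub>m n - proj1 n f)"
  then have ij: "i < n" "j < n" by (simp_all add: proj1_def)
  have "(1\<^sub>m n - proj1 n f) $$ (j,i) = (if j = i then 1 else 0) - f$j * cnj (f$i)"
    using ij by (simp add: proj1_def)
  moreover have "(1\<^sub>m n - proj1 n f) $$ (i,j) = (if i = j then 1 else 0) - f$i * cnj (f$j)"
    using ij by (simp add: proj1_def)
  moreover have "adj (1\<^sub>m n - proj1 n f) $$ (i,j) = cnj ((1\<^sub>m n - proj1 n f) $$ (j,i))"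
    using ij unfolding adj_def by (simp add: proj1_def)
  ultimately show "adj (1\<^sub>m n - proj1 n f) $$ (i,j) = (1\<^sub>m n - proj1 n f) $$ (i,j)"
    by simp
qed (simp_all add: adj_def proj1_def)

lemma proj1_carrier: "proj1 n f \<in> carrier_mat n n" by (simp add: proj1_def)

lemma adj_proj1: "adj (proj1 n f) = proj1 n f"
proof (rule eq_matI)
  fix i j assume "i < dim_row (proj1 n f)" "j < dim_col (proj1 n f)"
  then have ij: "i < n" "j < n" by (simp_all add: proj1_def)
  show "adj (proj1 n f) $$ (i,j) = proj1 n f $$ (i,j)"
    using ij unfolding adj_def by (simp add: proj1_def)
qed (simp_all add: adj_def proj1_def)

lemma proj1_psd0:
  assumes f: "f \<in> carrier_vec n"
  shows "psd_mat n (proj1 n f)"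
  unfolding psd_mat_def
proof (intro conjI ballI)
  fix v :: "complex vec" assume v: "v \<in> carrier_vec n"
  have e: "braket v (proj1 n f *\<^sub>v v) = complex_of_real ((cmod (braket f v))^2)"
    by (rule proj1_braket[OF f v])
  show "Im (braket v (proj1 n f *\<^sub>v v)) = 0" unfolding e by (simp only: Im_complex_of_real)
  show "Re (braket v (proj1 n f *\<^sub>v v)) \<ge> 0" unfolding e by (simp only: Re_complex_of_real zero_le_power2)
qed (rule proj1_carrier, rule adj_proj1)

lemma minus_proj_apply:
  assumes v: "v \<in> carrier_vec n"
  shows "(1\<^sub>m n - proj1 n f) *\<^sub>v v = v - proj1 n f *\<^sub>v v"
proof -
  have "(1\<^sub>m n - proj1 n f) *\<^sub>v v = 1\<^sub>m n *\<^sub>v v - proj1 n f *\<^sub>v v"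
    by (rule minus_mult_distrib_mat_vec[OF one_carrier_mat proj1_carrier v])
  then show ?thesis using v by simp
qed

lemma Im_braket_self: "Im (braket v v) = 0"
proof -
  have "braket v v = complex_of_real (\<Sum>j<dim_vec v. (cmod (v$j))^2)"
    unfolding braket_def by (simp only: cnj_mult_self of_real_sum)
  then show ?thesis by (simp only: Im_complex_of_real)
qed

lemma proj1_psd1:
  assumes f: "f \<in> carrier_vec n" and f1: "braket f f = 1"
  shows "psd_mat n (1\<^sub>m n - proj1 n f)"
  unfolding psd_mat_def
proof (intro conjI ballI)
  fix v :: "complex vec" assume v: "v \<in> carrier_vec n"
  have pv: "proj1 n f *\<^sub>v v \<in> carrier_vec n" using v proj1_carrier by (rule mult_mat_vec_carrier[rotated])
  have e: "braket v ((1\<^sub>m n - proj1 n f) *\<^sub>v v) = braket v v - complex_of_real ((cmod (braket f v))^2)"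
  proof -
    have "braket v (v - proj1 n f *\<^sub>v v) = braket v v - braket v (proj1 n f *\<^sub>v v)"
    proof (rule braket_diff2)
      have d1: "dim_vec v = n" using v by (rule carrier_vecD)
      have d2: "dim_vec (proj1 n f *\<^sub>v v) = n" using pv by (rule carrier_vecD)
      show "dim_vec v = dim_vec v" ..
      show "dim_vec (proj1 n f *\<^sub>v v) = dim_vec v" unfolding d1 d2 ..
    qed
    then show ?thesis unfolding minus_proj_apply[OF v] proj1_braket[OF f v] .
  qed
  show "Im (braket v ((1\<^sub>m n - proj1 n f) *\<^sub>v v)) = 0" unfolding e
    by (simp only: minus_complex.sel(2) Im_complex_of_real Im_braket_self diff_zero)
  show "Re (braket v ((1\<^sub>m n - proj1 n f) *\<^sub>v v)) \<ge> 0" unfolding e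
    using cauchy_schwarz1[OF f v f1] by (simp only: minus_complex.sel(1) Re_complex_of_real diff_ge_0_iff_ge)
next
  show "1\<^sub>m n - proj1 n f \<in> carrier_mat n n" by (rule minus_carrier_mat[OF proj1_carrier])
qed (rule adj_minus_proj)

lemma proj1_sum: "proj1 n f + (1\<^sub>m n - proj1 n f) = 1\<^sub>m n"
proof (rule eq_matI)
  fix i j assume "i < dim_row (1\<^sub>m n :: complex mat)" "j < dim_col (1\<^sub>m n :: complex mat)"
  then have ij: "i < n" "j < n" by simp_all
  have "(1\<^sub>m n - proj1 n f) $$ (i,j) = (if i = j then 1 else 0) - f$i * cnj (f$j)"
    using ij by (simp add: proj1_def)
  moreover have "proj1 n f $$ (i,j) = f$i * cnj (f$j)" using ij by (simp add: proj1_def)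
  moreover have "(proj1 n f + (1\<^sub>m n - proj1 n f)) $$ (i,j) = proj1 n f $$ (i,j) + (1\<^sub>m n - proj1 n f) $$ (i,j)"
    using ij by (simp add: proj1_def)
  ultimately show "(proj1 n f + (1\<^sub>m n - proj1 n f)) $$ (i,j) = 1\<^sub>m n $$ (i,j)"
    using ij by simp
qed (simp_all add: proj1_def)

lemma proj1_qf:
  assumes f: "f \<in> carrier_vec n" and v: "v \<in> carrier_vec n"
  shows "qf (proj1 n f) v = (cmod (braket f v))^2"
  unfolding qf_def proj1_braket[OF f v] by (simp only: Re_complex_of_real)

definition dl :: "nat \<Rightarrow> real" where "dl N = 1 / (real N ^ 2 - 3 * real N + 1)"
definition cc :: "nat \<Rightarrow> real" where "cc N = - dl N * (real N - 1)"
definition ss :: "nat \<Rightarrow> real" where "ss N = sqrt (1 - (cc N)^2)"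

definition U2 :: "nat \<Rightarrow> complex mat" where
  "U2 N = mat 2 2 (\<lambda>(i,j). complex_of_real (if i = 0 \<and> j = 0 then cc N else if i = 1 \<and> j = 1 then - cc N else ss N))"
definition chi2 :: "complex vec" where "chi2 = vec 2 (\<lambda>i. if i = 0 then 1 else 0)"

lemma sum2: "(\<Sum>k<2. f k) = f 0 + f (1::nat)"
  by (simp add: numeral_2_eq_2)

lemma sum02: "(\<Sum>k\<in>{0..<2}. f k) = f 0 + f (1::nat)"
  by (simp add: numeral_2_eq_2)

lemma less2: "(i::nat) < 2 \<longleftrightarrow> i = 0 \<or> i = 1" by auto

lemma dl_facts:
  assumes N: "N > 3"
  shows "dl N > 0" "dl N * (real N ^ 2 - 3 * real N + 1) = 1" "cc N > -1" "cc N < 0"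
    "(ss N)^2 = 1 - (cc N)^2" "ss N > 0"
proof -
  have N4: "real N \<ge> 4" using N by simp
  define K where "K = real N ^ 2 - 3 * real N + 1"
  have "real N * (real N - 3) \<ge> 0" using N4 by simp
  moreover have "K = real N * (real N - 3) + 1" unfolding K_def by (simp add: algebra_simps power2_eq_square)
  ultimately have K: "K > 0" by simp
  show dp: "dl N > 0" unfolding dl_def K_def[symmetric] using K by simp
  show dK: "dl N * (real N ^ 2 - 3 * real N + 1) = 1" unfolding dl_def using K unfolding K_def by simp
  have "K - (real N - 1) = real N * (real N - 4) + 2" unfolding K_def by (simp add: algebra_simps power2_eq_square)
  moreover have "real N * (real N - 4) \<ge> 0" using N4 by simp
  ultimately have "real N - 1 < K" by simp
  then have "(real N - 1) / K < 1" using K by simp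
  then show c1: "cc N > -1" unfolding cc_def dl_def K_def[symmetric] by simp
  show c0: "cc N < 0" unfolding cc_def using dp N4 by simp
  have "(-cc N)*(-cc N) < 1*1" using c1 c0 by (intro mult_strict_mono) auto
  then have "(cc N)^2 < 1" by (simp add: power2_eq_square)
  then show "(ss N)^2 = 1 - (cc N)^2" "ss N > 0" unfolding ss_def by simp_all
qed

lemma U2_unitary:
  assumes N: "N > 3"
  shows "unitary_mat 2 (U2 N)"
proof -
  have s2: "(ss N)^2 = 1 - (cc N)^2" using dl_facts[OF N] by simp
  have adjU: "adj (U2 N) = U2 N"
    by (rule eq_matI) (auto simp: adj_def U2_def less2)
  have UU: "U2 N * U2 N = 1\<^sub>m 2"
  proof (rule eq_matI)
    fix i j assume "i < dim_row (1\<^sub>m 2 :: complex mat)" "j < dim_col (1\<^sub>m 2 :: complex mat)"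
    then have ij: "i < 2" "j < 2" by simp_all
    have "(U2 N * U2 N) $$ (i,j) = (\<Sum>k<2. U2 N $$ (i,k) * U2 N $$ (k,j))"
      using ij by (simp add: U2_def scalar_prod_def atLeast0LessThan)
    also have "\<dots> = 1\<^sub>m 2 $$ (i,j)"
    proof -
      have "complex_of_real (ss N) * complex_of_real (ss N) = complex_of_real (1 - (cc N)^2)"
        using s2 by (metis of_real_mult power2_eq_square)
      then show ?thesis using ij unfolding sum2 by (auto simp: U2_def less2 power2_eq_square)
    qed
    finally show "(U2 N * U2 N) $$ (i,j) = 1\<^sub>m 2 $$ (i,j)" .
  qed (simp_all add: U2_def)
  show ?thesis unfolding unitary_mat_def adjU using UU by (simp add: U2_def)
qed

lemma chi2_facts: "chi2 \<in> carrier_vec 2" "braket chi2 chi2 = 1"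
  by (simp_all add: chi2_def braket_def sum2)

lemma U2chi: "U2 N *\<^sub>v chi2 = vec 2 (\<lambda>i. complex_of_real (if i = 0 then cc N else ss N))"
  by (rule eq_vecI) (auto simp: U2_def chi2_def scalar_prod_def sum02 less2)

lemma alg_id:
  fixes N d c s w1 g0 g1 :: real
  assumes h: "d * (N^2 - 3*N + 1) = 1" and hc: "c = - d * (N - 1)" and hs: "s^2 = 1 - c^2" and hw: "w1 = N - 1 + c"
    and h0: "g0 = s * w1" and h1: "g1 = N * (1 - d) - w1^2"
  shows "N * g0^2 - (w1 * g0 + s * g1)^2 = N * d * (g0^2 + g1^2)"
proof -
  have e1: "w1 * g0 + s * g1 = s * (N * (1 - d))" unfolding h0 h1 by (simp add: algebra_simps power2_eq_square)
  have "(w1 * g0 + s * g1)^2 = s^2 * (N * (1 - d))^2" unfolding e1 by (simp add: power_mult_distrib)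
  then have "N * g0^2 - (w1 * g0 + s * g1)^2 - N * d * (g0^2 + g1^2) =
     N * (s^2 * (w1^2 - N * (1-d)^2) - d * (s^2 * w1^2 + g1^2))"
    unfolding h0 by (simp add: algebra_simps power2_eq_square)
  also have "s^2 * (w1^2 - N * (1-d)^2) - d * (s^2 * w1^2 + g1^2) =
     (d * (N^2 - 3*N + 1) - 1) * ((-1+3*N-N^2) + d*(3 - 8*N + 3*N^2) + d^2*(-3+7*N-3*N^2) + d^3*(1-2*N+N^2))"
    unfolding hs h1 hw hc by (simp add: algebra_simps power2_eq_square power3_eq_cube)
  finally show ?thesis using h by simp
qed

definition w1 :: "nat \<Rightarrow> real" where "w1 N = real N - 1 + cc N"
definition g0 :: "nat \<Rightarrow> real" where "g0 N = ss N * w1 N"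
definition g1 :: "nat \<Rightarrow> real" where "g1 N = real N * (1 - dl N) - (w1 N)^2"
definition GG :: "nat \<Rightarrow> real" where "GG N = (g0 N)^2 + (g1 N)^2"
definition fv :: "nat \<Rightarrow> complex vec" where
  "fv N = vec (N*2) (\<lambda>j. complex_of_real ((if j mod 2 = 0 then g0 N else g1 N) / sqrt (real N * GG N)))"

lemma GG_pos: assumes N: "N > 3" shows "GG N > 0"
proof -
  have "w1 N > 0" unfolding w1_def using dl_facts(3)[OF N] N by simp
  then have "g0 N > 0" unfolding g0_def using dl_facts(6)[OF N] by simp
  then show ?thesis unfolding GG_def by (simp add: add_pos_nonneg)
qed

lemma braket_real:
  "braket (vec n (\<lambda>j. complex_of_real (u j))) (vec n (\<lambda>j. complex_of_real (v j))) = complex_of_real (\<Sum>j<n. u j * v j)"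
  by (simp add: braket_def)

lemma mod2_simps [simp]:
  fixes i :: nat
  shows "(i*2) mod 2 = 0" "(i*2) div 2 = i" "Suc (i*2) mod 2 = 1" "Suc (i*2) div 2 = i"
  by presburger+

lemma sum_split2:
  "(\<Sum>j<N*2. f j) = (\<Sum>i<N. f (i*2) + f (i*2+1))" for N :: nat and f :: "nat \<Rightarrow> real"
  by (simp add: sum_split[of f N 2] sum2)

lemma fv_facts:
  assumes N: "N > 3"
  shows "fv N \<in> carrier_vec (N*2)" "braket (fv N) (fv N) = 1"
proof -
  show "fv N \<in> carrier_vec (N*2)" by (simp add: fv_def)
  have G: "GG N > 0" by (rule GG_pos[OF N])
  have Np: "real N > 0" using N by simp
  define q where "q = sqrt (real N * GG N)"
  have q2: "q * q = real N * GG N" unfolding q_def using G Np by simp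
  have "(\<Sum>j<N*2. (if j mod 2 = 0 then g0 N else g1 N) / q * ((if j mod 2 = 0 then g0 N else g1 N) / q))
      = (\<Sum>i<N. (g0 N / q) * (g0 N / q) + (g1 N / q) * (g1 N / q))"
    unfolding sum_split2 by simp
  also have "\<dots> = real N * (GG N / (q * q))"
    by (simp add: GG_def power2_eq_square add_divide_distrib)
  also have "\<dots> = 1" using q2 G Np by simp
  finally have "(\<Sum>j<N*2. (if j mod 2 = 0 then g0 N else g1 N) / q * ((if j mod 2 = 0 then g0 N else g1 N) / q)) = 1" .
  then show "braket (fv N) (fv N) = 1" unfolding fv_def braket_real q_def by simp
qed

lemma phi2:
  "phi N 2 (\<lambda>_. 1 / real N) chi2 (U2 N) x = vec (N*2) (\<lambda>j. complex_of_real (sqrt (1 / real N) *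
     (if x (j div 2) then (if j mod 2 = 0 then cc N else ss N) else (if j mod 2 = 0 then 1 else 0))))"
proof -
  have U: "U2 N \<in> carrier_mat 2 2" by (simp add: U2_def)
  show ?thesis unfolding phi_def enc_apply[OF U chi2_facts(1)]
    by (rule eq_vecI) (auto simp: U2chi[unfolded chi2_def] chi2_def)
qed

lemma sum_if_count_r:
  fixes A B :: real and N k :: nat
  assumes "k < N"
  shows "(\<Sum>i<N. if i = k then A else B) = A + (real N - 1) * B"
proof -
  have "(\<Sum>i<N. if i = k then A else B) = (\<Sum>i<N. B + (if i = k then A - B else 0))"
    by (intro sum.cong refl) auto
  also have "\<dots> = real N * B + (A - B)" using assms by (simp add: sum.distrib)
  finally show ?thesis by (simp add: algebra_simps)
qed

lemma existence:
  assumes N: "N > 3"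
  shows "\<exists>\<chi> U Pi0 Pi1. valid_strategy N 2 (\<lambda>_. 1 / real N) \<chi> U Pi0 Pi1 \<and>
            fp_violation N 2 (\<lambda>_. 1 / real N) \<chi> U Pi0 Pi1 = 1 / ((real N + 1) * (real N ^ 2 - 3 * real N + 1))"
proof (intro exI conjI)
  define P where "P = proj1 (N*2) (fv N)"
  have Np: "real N > 0" using N by simp
  show V: "valid_strategy N 2 (\<lambda>_. 1 / real N) chi2 (U2 N) P (1\<^sub>m (N*2) - P)"
    unfolding valid_strategy_def P_def
    using chi2_facts U2_unitary[OF N] proj1_psd0[OF fv_facts(1)[OF N]] proj1_psd1[OF fv_facts[OF N]]
      proj1_sum Np by simp
  define q where "q = sqrt (real N * GG N)"
  define r where "r = sqrt (1 / real N) / q"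
  define R where "R = (\<lambda>x. \<Sum>i<N. g0 N * (if x i then cc N else 1) + g1 N * (if x i then ss N else 0))"
  have br: "braket (fv N) (phi N 2 (\<lambda>_. 1 / real N) chi2 (U2 N) x) = complex_of_real (r * R x)" for x
  proof -
    have "braket (fv N) (phi N 2 (\<lambda>_. 1 / real N) chi2 (U2 N) x) = complex_of_real
      (\<Sum>j<N*2. (if j mod 2 = 0 then g0 N else g1 N) / q * (sqrt (1 / real N) *
         (if x (j div 2) then (if j mod 2 = 0 then cc N else ss N) else (if j mod 2 = 0 then 1 else 0))))"
      unfolding fv_def phi2 braket_real q_def ..
    also have "(\<Sum>j<N*2. (if j mod 2 = 0 then g0 N else g1 N) / q * (sqrt (1 / real N) *
         (if x (j div 2) then (if j mod 2 = 0 then cc N else ss N) else (if j mod 2 = 0 then 1 else 0))))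
      = (\<Sum>i<N. r * (g0 N * (if x i then cc N else 1) + g1 N * (if x i then ss N else 0)))"
      unfolding sum_split2 r_def by (intro sum.cong refl) (simp add: algebra_simps)
    also have "\<dots> = r * R x" unfolding R_def by (simp add: sum_distrib_left)
    finally show ?thesis .
  qed
  have qv: "qf P (phi N 2 (\<lambda>_. 1 / real N) chi2 (U2 N) x) = (r * R x)^2" for x
    unfolding P_def proj1_qf[OF fv_facts(1)[OF N] phi_carrier] br norm_of_real power2_abs ..
  have R0: "R (\<lambda>_. False) = real N * g0 N" unfolding R_def by simp
  have Rk: "R (\<lambda>i. i = k) = w1 N * g0 N + ss N * g1 N" if k: "k < N" for k
  proof -
    have "R (\<lambda>i. i = k) = (\<Sum>i<N. if i = k then g0 N * cc N + g1 N * ss N else g0 N)"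
      unfolding R_def by (intro sum.cong refl) simp
    also have "\<dots> = g0 N * cc N + g1 N * ss N + (real N - 1) * g0 N" by (rule sum_if_count_r[OF k])
    finally show ?thesis unfolding w1_def by (simp add: algebra_simps)
  qed
  have G: "GG N > 0" by (rule GG_pos[OF N])
  have r2: "r^2 = 1 / (real N * (real N * GG N))"
    unfolding r_def q_def using G Np by (simp add: power_divide)
  have alg: "real N * (g0 N)^2 - (w1 N * g0 N + ss N * g1 N)^2 = real N * dl N * GG N"
    unfolding GG_def
  proof (rule alg_id)
    show "dl N * ((real N)^2 - 3 * real N + 1) = 1" using dl_facts(2)[OF N] .
    show "cc N = - dl N * (real N - 1)" unfolding cc_def ..
    show "(ss N)^2 = 1 - (cc N)^2" using dl_facts(5)[OF N] .
    show "w1 N = real N - 1 + cc N" unfolding w1_def ..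
    show "g0 N = ss N * w1 N" unfolding g0_def ..
    show "g1 N = real N * (1 - dl N) - (w1 N)^2" unfolding g1_def ..
  qed
  have "qf P (phi N 2 (\<lambda>_. 1 / real N) chi2 (U2 N) (\<lambda>_. False)) - (\<Sum>k<N. qf P (phi N 2 (\<lambda>_. 1 / real N) chi2 (U2 N) (\<lambda>i. i = k)))
      = r^2 * (real N * g0 N)^2 - real N * (r^2 * (w1 N * g0 N + ss N * g1 N)^2)"
    unfolding qv R0 by (simp add: Rk power_mult_distrib)
  also have "\<dots> = r^2 * real N * (real N * (g0 N)^2 - (w1 N * g0 N + ss N * g1 N)^2)"
    by (simp add: algebra_simps power2_eq_square)
  also have "\<dots> = dl N" unfolding alg r2 using G Np by (simp add: field_simps)
  finally have main: "qf P (phi N 2 (\<lambda>_. 1 / real N) chi2 (U2 N) (\<lambda>_. False)) - (\<Sum>k<N. qf P (phi N 2 (\<lambda>_. 1 / real N) chi2 (U2 N) (\<lambda>i. i = k))) = dl N" .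
  show "fp_violation N 2 (\<lambda>_. 1 / real N) chi2 (U2 N) P (1\<^sub>m (N*2) - P) = 1 / ((real N + 1) * (real N ^ 2 - 3 * real N + 1))"
    unfolding fp_reduce[OF V] main dl_def by simp
qed


theorem theorem1:
  fixes N :: nat
  assumes "N > 3"
  shows "(\<forall>d p \<chi> U Pi0 Pi1. valid_strategy N d p \<chi> U Pi0 Pi1 \<longrightarrow>
            fp_violation N d p \<chi> U Pi0 Pi1 \<le> 1 / ((real N + 1) * (real N ^ 2 - 3 * real N + 1)))
       \<and> (\<exists>\<chi> U Pi0 Pi1. valid_strategy N 2 (\<lambda>_. 1 / real N) \<chi> U Pi0 Pi1 \<and>
            fp_violation N 2 (\<lambda>_. 1 / real N) \<chi> U Pi0 Pi1 = 1 / ((real N + 1) * (real N ^ 2 - 3 * real N + 1)))"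
  using upper_bound[OF assms] existence[OF assms] by blast

end
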